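(* Let $(\mathcal{X},\mathcal{F},\sigma)$ be a probability space with an $\alpha$-homogeneous atomic filtration, $0<\alpha\le1/2$, and let $f\in L^1(\mathcal{X})$ be real-valued with $Sf\in L^\infty$ and $\mathbb{E}f=0$. Then for every $\lambda>0$ \[ \bigl|\{x\in\mathcal{X}: f^*(x)>\lambda\}\bigr|\le 2e^{-\alpha\lambda^2/\|Sf\|_\infty^2}. \]
   Context: An atomic filtration on a probability space $(\mathcal{X},\mathcal{F},\sigma)$ is an increasing sequence of $\sigma$-algebras $\mathcal{F}_n\subset\mathcal{F}$, $n\ge0$, with $\mathcal{F}_0=\{\varnothing,\mathcal{X}\}$, $\mathcal{F}$ generated by the $\mathcal{F}_n$, and such that for each $n$ there is a countable collection $\mathcal{D}_n$ of disjoint sets ("cubes") with every set of $\mathcal{F}_n$ a union of sets of $\mathcal{D}_n$. Write $\mathcal{D}=\bigcup_n\mathcal{D}_n$, $|A|=\sigma(A)$, and for $Q\in\mathcal{D}_n$ let $\operatorname{ch}Q=\{R\in\mathcal{D}_{n+1}:R\subset Q\}$. The filtration is $\alpha$-homogeneous if $|Q'|\ge\alpha|Q|$ for every cube $Q$ and every $Q'\in\operatorname{ch}Q$. For $|A|>0$, $\langle f\rangle_A=|A|^{-1}\int_A f$; $\mathbb{E}f=\langle f\rangle_{\mathcal{X}}$. Let $\mathbf{E}_Q f=\langle f\rangle_Q\mathbf{1}_Q$, $\mathbf{E}_nf=\sum_{Q\in\mathcal{D}_n}\mathbf{E}_Qf$, $\Delta_Q=\sum_{R\in\operatorname{ch}Q}\mathbf{E}_R-\mathbf{E}_Q$,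 and $S f=\bigl(\sum_{Q\in\mathcal{D}}|\Delta_Q f|^2\bigr)^{1/2}$. The martingale maximal function is $f^*(x)=\sup_{n\ge0}|\mathbf{E}_nf(x)|$. *)

theory Defs
  imports "HOL-Probability.Probability"
begin

definition atomic_filtration ::
  "'a measure \<Rightarrow> (nat \<Rightarrow> 'a set set) \<Rightarrow> (nat \<Rightarrow> 'a set set) \<Rightarrow> bool" where
  "atomic_filtration M F D \<longleftrightarrow>
     (\<forall>n. sigma_algebra (space M) (F n) \<and> F n \<subseteq> sets M \<and> F n \<subseteq> F (Suc n)) \<and>
     F 0 = {{}, space M} \<and>
     sets M = sigma_sets (space M) (\<Union>n. F n) \<and>
     (\<forall>n. countable (D n) \<and> disjoint (D n) \<and> D n \<subseteq> F n \<and>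
          (\<forall>A\<in>F n. \<exists>C\<subseteq>D n. A = \<Union>C))"

definition children :: "(nat \<Rightarrow> 'a set set) \<Rightarrow> nat \<Rightarrow> 'a set \<Rightarrow> 'a set set" where
  "children D n Q = {R \<in> D (Suc n). R \<subseteq> Q}"

definition homogeneous ::
  "'a measure \<Rightarrow> (nat \<Rightarrow> 'a set set) \<Rightarrow> real \<Rightarrow> bool" where
  "homogeneous M D \<alpha> \<longleftrightarrow>
     (\<forall>n. \<forall>Q\<in>D n. \<forall>Q'\<in>children D n Q. measure M Q' \<ge> \<alpha> * measure M Q)"

definition avg :: "'a measure \<Rightarrow> ('a \<Rightarrow> real) \<Rightarrow> 'a set \<Rightarrow> real" where
  "avg M f A = (LINT x:A|M. f x) / measure M A"

definition cube_exp :: "'a measure \<Rightarrow> ('a \<Rightarrow> real) \<Rightarrow> 'a set \<Rightarrow> 'a \<Rightarrow> real" where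
  "cube_exp M f Q x = avg M f Q * indicator Q x"

definition cond_exp_n ::
  "'a measure \<Rightarrow> (nat \<Rightarrow> 'a set set) \<Rightarrow> nat \<Rightarrow> ('a \<Rightarrow> real) \<Rightarrow> 'a \<Rightarrow> real" where
  "cond_exp_n M D n f x = (\<Sum>\<^sub>\<infinity>Q\<in>D n. cube_exp M f Q x)"

definition mdiff ::
  "'a measure \<Rightarrow> (nat \<Rightarrow> 'a set set) \<Rightarrow> nat \<Rightarrow> 'a set \<Rightarrow> ('a \<Rightarrow> real) \<Rightarrow> 'a \<Rightarrow> real" where
  "mdiff M D n Q f x = (\<Sum>\<^sub>\<infinity>R\<in>children D n Q. cube_exp M f R x) - cube_exp M f Q x"

definition sqfun_sq ::
  "'a measure \<Rightarrow> (nat \<Rightarrow> 'a set set) \<Rightarrow> ('a \<Rightarrow> real) \<Rightarrow> 'a \<Rightarrow> ennreal" where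
  "sqfun_sq M D f x = (\<Sum>\<^sub>\<infinity>p\<in>Sigma UNIV D. ennreal ((mdiff M D (fst p) (snd p) f x)\<^sup>2))"

definition sqfun :: "'a measure \<Rightarrow> (nat \<Rightarrow> 'a set set) \<Rightarrow> ('a \<Rightarrow> real) \<Rightarrow> 'a \<Rightarrow> ereal" where
  "sqfun M D f x = (if sqfun_sq M D f x = \<infinity> then \<infinity>
                     else ereal (sqrt (enn2real (sqfun_sq M D f x))))"

definition maxfun :: "'a measure \<Rightarrow> (nat \<Rightarrow> 'a set set) \<Rightarrow> ('a \<Rightarrow> real) \<Rightarrow> 'a \<Rightarrow> ereal" where
  "maxfun M D f x = (SUP n. ereal \<bar>cond_exp_n M D n f x\<bar>)"

end

theory Submission
  imports Defs
begin

lemma ln_ge_2x: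
  fixes x :: real assumes "0 \<le> x" shows "2*x/(2+x) \<le> ln (1+x)"
proof -
  let ?f = "\<lambda>u::real. ln (1+u) - 2*u/(2+u)"
  have "?f 0 \<le> ?f x"
  proof (rule DERIV_nonneg_imp_nondecreasing[OF assms])
    fix u :: real assume u: "0 \<le> u" "u \<le> x"
    have "DERIV ?f u :> 1 / (1 + u) - 4 / ((2 + u) * (2 + u))"
      using u by (auto intro!: derivative_eq_intros)
    moreover have "4 / ((2 + u) * (2 + u)) \<le> 1 / (1 + u)"
    proof -
      have "4 * (1+u) \<le> (2+u)*(2+u)" by (simp add: algebra_simps)
      then show ?thesis using u by (simp add: divide_simps)
    qed
    ultimately show "\<exists>y. DERIV ?f u :> y \<and> y \<ge> 0" by force
  qed
  then show ?thesis by simp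
qed

lemma ln_ge_v:
  fixes v :: real assumes "0 < v" "v \<le> 1" shows "(v - 1/v)/2 \<le> ln v"
proof -
  let ?f = "\<lambda>v::real. ln v - (v - 1/v)/2"
  have "?f 1 \<le> ?f v"
  proof (rule DERIV_nonpos_imp_nonincreasing[OF assms(2)])
    fix u :: real assume u: "v \<le> u" "u \<le> 1"
    then have u1: "u > 0" using assms by linarith
    have "DERIV ?f u :> 1 / u - (2 + 2 / (u * u)) / 4"
      using u1 by (auto intro!: derivative_eq_intros)
    moreover have "1 / u \<le> (2 + 2 / (u * u)) / 4"
    proof -
      have "4*u \<le> 2*u*u + 2" using sum_squares_ge_zero[of "u-1" 0] by (simp add: algebra_simps power2_eq_square)
      then show ?thesis using u1 by (simp add: divide_simps)
    qed
    ultimately show "\<exists>y. DERIV ?f u :> y \<and> y \<le> 0" by force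
  qed
  then show ?thesis by simp
qed

lemma ln_ge_neg:
  fixes x :: real assumes "-1 < x" "x \<le> 0" shows "x - x^2/(2*(1+x)) \<le> ln (1+x)"
proof -
  have v: "0 < 1+x" "1 + x \<le> 1" using assms by auto
  have "x - x^2/(2*(1+x)) = ((1+x) - 1/(1+x))/2"
    using v by (simp add: field_simps power2_eq_square)
  then show ?thesis using ln_ge_v[OF v] by simp
qed

lemma exp_le_E1: fixes x :: real assumes "0 \<le> x" shows "exp (2*x/(2+x)) \<le> 1 + x"
proof -
  have "exp (2*x/(2+x)) \<le> exp (ln (1+x))" using ln_ge_2x[OF assms] by simp
  also have "\<dots> = 1 + x" using assms by simp
  finally show ?thesis .
qed

lemma exp_le_E2: fixes x :: real assumes "-1 < x" "x \<le> 0" shows "exp (x - x^2/(2*(1+x))) \<le> 1 + x"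
proof -
  have "exp (x - x^2/(2*(1+x))) \<le> exp (ln (1+x))" using ln_ge_neg[OF assms] by simp
  also have "\<dots> = 1 + x" using assms by simp
  finally show ?thesis .
qed

lemma exp_le_B2: fixes x :: real assumes "0 \<le> x" shows "exp (x - x^2/2) \<le> 1 + x"
proof -
  have "x - x^2/2 \<le> 2*x/(2+x)"
  proof -
    have "(x - x^2/2)*(2+x) = 2*x - x^3/2" by (simp add: algebra_simps power2_eq_square power3_eq_cube)
    also have "\<dots> \<le> 2*x" using assms by simp
    finally show ?thesis using assms by (simp add: field_simps)
  qed
  then have "exp (x - x^2/2) \<le> exp (2*x/(2+x))" by simp
  also have "\<dots> \<le> 1 + x" by (rule exp_le_E1[OF assms])
  finally show ?thesis .
qed

lemma A1:
  fixes q t :: real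
  assumes q: "0 < q" "q < 1" and t: "0 \<le> t"
  shows "exp (min q (1/2) * t * (2 - t)) * (q + (1-2*q)*t) \<le> q + (1-q)*t"
proof (cases "q \<le> 1/2")
  case True
  then have r: "min q (1/2) = q" by simp
  have den: "q + (1-2*q)*t > 0" using q t True by (simp add: add_pos_nonneg)
  define x where "x = q*t/(q + (1-2*q)*t)"
  have x0: "0 \<le> x" unfolding x_def using q t den by simp
  have "q*t*(2-t) \<le> 2*x/(2+x)"
  proof (cases "t = 0")
    case True then show ?thesis by (simp add: x_def)
  next
    case False
    then have tp: "t > 0" using t by simp
    have d2: "2*q + (2-3*q)*t > 0" using q True t by (simp add: add_pos_nonneg)
    define d where "d = q + (1-2*q)*t"
    have dd: "2*d + q*t = 2*q + (2-3*q)*t" unfolding d_def by (simp add: algebra_simps)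
    have d0: "d > 0" "2*d + q*t > 0" using den d2 dd unfolding d_def by auto
    have "2 + x = (2*d + q*t)/d" unfolding x_def d_def[symmetric] using d0 by (simp add: field_simps)
    then have "2*x/(2+x) = (2*(q*t/d)) / ((2*d + q*t)/d)" unfolding x_def d_def[symmetric] by simp
    also have "\<dots> = 2*q*t/(2*d + q*t)" using d0 by (simp add: field_simps)
    finally have e: "2*x/(2+x) = 2*q*t/(2*q + (2-3*q)*t)" unfolding dd .
    have poly: "0 \<le> (2-3*q)*t^2 - 4*(1-2*q)*t + 2*(1-2*q)"
    proof -
      have "(2-3*q)*((2-3*q)*t^2 - 4*(1-2*q)*t + 2*(1-2*q)) = ((2-3*q)*t - 2*(1-2*q))^2 + 2*q*(1-2*q)"
        by (simp add: algebra_simps power2_eq_square)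
      moreover have "((2-3*q)*t - 2*(1-2*q))^2 + 2*q*(1-2*q) \<ge> 0" using q True by simp
      moreover have "2 - 3*q > 0" using True by simp
      ultimately show ?thesis by (metis zero_le_mult_iff not_less order_less_le)
    qed
    have "(2-t)*(2*q + (2-3*q)*t) \<le> 2"
      using poly by (simp add: algebra_simps power2_eq_square)
    then have "q*t*((2-t)*(2*q + (2-3*q)*t)) \<le> q*t*2"
      using q tp by (intro mult_left_mono) auto
    then show ?thesis unfolding e using d2 by (simp add: field_simps)
  qed
  then have "exp (q*t*(2-t)) \<le> exp (2*x/(2+x))" by simp
  also have "\<dots> \<le> 1 + x" by (rule exp_le_E1[OF x0])
  finally have "exp (q*t*(2-t)) * (q + (1-2*q)*t) \<le> (1+x) * (q + (1-2*q)*t)"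
    using den by (intro mult_right_mono) auto
  also have "(1+x) * (q + (1-2*q)*t) = q + (1-q)*t"
    unfolding x_def using den by (simp add: field_simps)
  finally show ?thesis unfolding r .
next
  case False
  then have r: "min q (1/2) = 1/2" by simp
  show ?thesis
  proof (cases "q + (1-2*q)*t \<le> 0")
    case True
    have "exp (min q (1/2) * t * (2 - t)) * (q + (1-2*q)*t) \<le> 0"
      using True by (simp add: mult_nonneg_nonpos)
    also have "0 \<le> q + (1-q)*t" using q t by simp
    finally show ?thesis .
  next
    case den: False
    have "1/2 * t * (2-t) = t - t^2/2" by (simp add: field_simps power2_eq_square)
    then have "exp (1/2 * t * (2-t)) = exp (t - t^2/2)" by simp
    also have "\<dots> \<le> 1 + t" by (rule exp_le_B2[OF t])
    finally have "exp (1/2 * t * (2-t)) * (q + (1-2*q)*t) \<le> (1+t) * (q + (1-2*q)*t)"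
      using den by (intro mult_right_mono) auto
    also have "\<dots> = q + (1-q)*t + (1-2*q)*t^2" by (simp add: algebra_simps power2_eq_square)
    also have "\<dots> \<le> q + (1-q)*t" using False by (simp add: mult_nonpos_nonneg)
    finally show ?thesis unfolding r .
  qed
qed

lemma L2_core:
  fixes q t :: real
  assumes q: "0 < q" "q < 1" and t: "0 \<le> t"
  shows "q * exp (-(min q (1/2)*(2*(1-q)*t/q + ((1-q)*t/q)^2))) + (1-q) * exp (min q (1/2)*t*(2-t)) \<le> 1"
proof -
  define r where "r = min q (1/2)"
  have r0: "r > 0" unfolding r_def using q by simp
  define D where "D = (\<lambda>t. q*(1 - exp (-(r*(2*(1-q)*t/q + ((1-q)*t/q)^2)))) - (1-q)*(exp (r*t*(2-t)) - 1))"
  define D' where "D' = (\<lambda>t. exp (- (r * ((2 - 2 * q) * t / q + ((1 - q) * t / q)\<^sup>2))) *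
    (((2 - 2 * q) / q + 2 * ((1 - q) * ((1 - q) * t)) / (q * q)) * r) * q -
    exp (r * t * (2 - t)) * (r * (2 - t) - r * t) * (1 - q))"
  have deriv: "DERIV D u :> D' u" for u
    unfolding D_def D'_def using q by (auto intro!: derivative_eq_intros)
  have cont: "continuous_on {0..2} D"
    unfolding D_def using q by (intro continuous_intros) auto
  have V0: "0 \<le> r*(2*(1-q)*u/q + ((1-q)*u/q)^2)" if "0 \<le> u" for u
    using r0 q that by (intro mult_nonneg_nonneg add_nonneg_nonneg) auto
  have big: "D u \<ge> 0" if "u \<ge> 2" for u
  proof -
    have "exp (-(r*(2*(1-q)*u/q + ((1-q)*u/q)^2))) \<le> 1" using V0[of u] that by simp
    moreover have "r*u*(2-u) \<le> 0" using r0 that by (simp add: mult_nonneg_nonpos)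
    then have "exp (r*u*(2-u)) \<le> 1" by simp
    ultimately have "q*(1 - exp (-(r*(2*(1-q)*u/q + ((1-q)*u/q)^2)))) \<ge> 0" "(1-q)*(exp (r*u*(2-u)) - 1) \<le> 0"
      using q by (auto intro!: mult_nonneg_nonneg mult_nonneg_nonpos)
    then show ?thesis unfolding D_def by simp
  qed
  have crit: "D u \<ge> 0" if u: "0 \<le> u" "D' u = 0" for u
  proof -
    define E1 where "E1 = exp (-(r*(2*(1-q)*u/q + ((1-q)*u/q)^2)))"
    define E2 where "E2 = exp (r*u*(2-u))"
    have "D' u = 2*r*(1-q)*(E1*(q + (1-q)*u)/q - E2*(1-u))"
      unfolding D'_def E1_def E2_def using q by (simp add: field_simps power2_eq_square)
    then have "E1*(q + (1-q)*u)/q - E2*(1-u) = 0" using u(2) r0 q by simp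
    then have e0: "E1*(q + (1-q)*u) = q*(1-u)*E2" using q by (simp add: field_simps)
    have e1: "q*E1*(q + (1-q)*u) = q^2*(1-u)*E2"
    proof -
      have "q*E1*(q + (1-q)*u) = q*(E1*(q + (1-q)*u))" by simp
      also have "\<dots> = q*(q*(1-u)*E2)" by (simp only: e0)
      finally show ?thesis by (simp add: power2_eq_square)
    qed
    have pos: "q + (1-q)*u > 0" using q u by (simp add: add_pos_nonneg)
    have "D u * (q + (1-q)*u) = (q + (1-q)*u) - E2*(q + (1-2*q)*u)"
    proof -
      have "D u = 1 - q*E1 - (1-q)*E2" unfolding D_def E1_def E2_def by (simp add: algebra_simps)
      then have "D u * (q + (1-q)*u) = (1 - q*E1 - (1-q)*E2) * (q + (1-q)*u)" by simp
      also have "\<dots> = (q + (1-q)*u) - q*E1*(q + (1-q)*u) - (1-q)*E2*(q + (1-q)*u)"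
        by (simp add: algebra_simps)
      also have "\<dots> = (q + (1-q)*u) - E2*(q^2*(1-u) + (1-q)*(q + (1-q)*u))" using e1 by (simp add: algebra_simps)
      also have "q^2*(1-u) + (1-q)*(q + (1-q)*u) = q + (1-2*q)*u" by (simp add: algebra_simps power2_eq_square)
      finally show ?thesis .
    qed
    also have "\<dots> \<ge> 0" using A1[OF q u(1)] unfolding E2_def r_def by simp
    finally show ?thesis using pos by (simp add: zero_le_mult_iff)
  qed
  have "D t \<ge> 0"
  proof (cases "t \<ge> 2")
    case True then show ?thesis by (rule big)
  next
    case False
    obtain t0 where t0: "t0 \<in> {0..2}" "\<forall>u\<in>{0..2}. D t0 \<le> D u"
      using continuous_attains_inf[OF compact_Icc _ cont] by auto
    have "D t0 \<ge> 0"
    proof (cases "t0 = 0 \<or> t0 = 2")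
      case True
      then show ?thesis using big[of 2] by (auto simp: D_def)
    next
      case False
      then have i: "0 < t0" "t0 < 2" using t0(1) by auto
      have "D' t0 = 0"
      proof (rule DERIV_local_min[OF deriv])
        show "0 < min t0 (2 - t0)" using i by simp
        show "\<forall>y. \<bar>t0 - y\<bar> < min t0 (2 - t0) \<longrightarrow> D t0 \<le> D y"
          using t0(2) by (auto simp: abs_if split: if_splits)
      qed
      then show ?thesis using crit[of t0] i by simp
    qed
    moreover have "t \<in> {0..2}" using t False by auto
    ultimately show ?thesis using t0(2) by (meson order_trans)
  qed
  then show ?thesis unfolding D_def r_def by (simp add: algebra_simps)
qed

definition gfun :: "real \<Rightarrow> real \<Rightarrow> real" where
  "gfun a y = exp (y - y^2/(4*a))"

lemma gfun_pos: "gfun a y > 0" unfolding gfun_def by simp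

lemma gfun_le_exp: assumes "0 < a" shows "gfun a y \<le> exp a"
proof -
  have "(y - 2*a)^2 \<ge> 0" by simp
  then have "4*a*y - y^2 \<le> 4*a*a" by (simp add: algebra_simps power2_eq_square)
  then have "y - y^2/(4*a) \<le> a" using assms by (simp add: field_simps)
  then show ?thesis unfolding gfun_def by simp
qed

lemma gfun_2a: assumes "0 < a" shows "gfun a (2*a) = exp a"
  unfolding gfun_def using assms by (simp add: power2_eq_square field_simps) 

lemma gfun_mono: assumes "0 < a" "y1 \<le> y2" "y2 \<le> 2*a" shows "gfun a y1 \<le> gfun a y2"
proof -
  have "(y2 - y1)*(y1 + y2) \<le> (y2 - y1)*(4*a)" using assms by (intro mult_left_mono) auto
  then have "y2^2 - y1^2 \<le> 4*a*(y2 - y1)" by (simp add: algebra_simps power2_eq_square)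
  then have "(y2^2 - y1^2)/(4*a) \<le> y2 - y1" using assms(1) by (simp add: pos_divide_le_eq mult.commute)
  then have "y2^2/(4*a) - y1^2/(4*a) \<le> y2 - y1" by (simp add: diff_divide_distrib)
  then have "y1 - y1^2/(4*a) \<le> y2 - y2^2/(4*a)" by linarith
  then show ?thesis unfolding gfun_def by simp
qed

lemma gfun_anti: assumes "0 < a" "a \<le> b" shows "gfun a y \<le> gfun b y"
proof -
  have "y^2/(4*b) \<le> y^2/(4*a)" using assms by (intro divide_left_mono) auto
  then show ?thesis unfolding gfun_def by simp
qed

lemma TL:
  assumes a: "0 < a" "a \<le> 1/2" and m: "0 \<le> m" "m \<le> 2*a" and z: "0 \<le> z" "z \<le> 2*a"
  shows "gfun a z \<le> gfun a m * (1 + (1 - m/(2*a))*(z - m))"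
proof -
  define k where "k = 1 - m/(2*a)"
  define d where "d = z - m"
  have k: "0 \<le> k" "k \<le> 1" unfolding k_def using a m by (auto simp: field_simps)
  have split: "z - z^2/(4*a) = (m - m^2/(4*a)) + (k*d - d^2/(4*a))"
    unfolding k_def d_def using a by (simp add: field_simps power2_eq_square)
  have gz: "gfun a z = gfun a m * exp (k*d - d^2/(4*a))"
    unfolding gfun_def split by (simp add: exp_add)
  have key: "exp (k*d - d^2/(4*a)) \<le> 1 + k*d"
  proof (cases "k*d \<ge> 0")
    case True
    have "k^2 \<le> 1" using k by (simp add: power_le_one)
    then have "k^2 * d^2 \<le> 1 * d^2" by (intro mult_right_mono) auto
    then have "(k*d)^2/2 \<le> d^2/2" by (simp add: power_mult_distrib)
    also have "d^2/2 \<le> d^2/(4*a)" using a by (intro divide_left_mono) auto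
    finally have "k*d - d^2/(4*a) \<le> k*d - (k*d)^2/2" by simp
    then have "exp (k*d - d^2/(4*a)) \<le> exp (k*d - (k*d)^2/2)" by simp
    also have "\<dots> \<le> 1 + k*d" by (rule exp_le_B2[OF True])
    finally show ?thesis .
  next
    case False
    then have kd: "k*d < 0" by simp
    have dm: "d \<ge> -m" unfolding d_def using z by simp
    have mk: "m = 2*a*(1-k)" unfolding k_def using a by (simp add: field_simps)
    have "k*(-m) \<le> k*d" using dm k by (intro mult_left_mono) auto
    then have "k*d \<ge> -(k*m)" by simp
    then have "1 + k*d \<ge> 1 - k*m" by simp
    moreover have "1 - k*m - 2*a*k^2 = 1 - 2*a*k" unfolding mk by (simp add: algebra_simps power2_eq_square)
    moreover have "1 - 2*a*k \<ge> 0"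
    proof -
      have "a*k \<le> (1/2)*1" using a k by (intro mult_mono) auto
      then show ?thesis by linarith
    qed
    ultimately have h: "1 + k*d \<ge> 2*a*k^2" by linarith
    have kp: "k > 0" using kd k by (cases "k = 0") auto
    have "2*a*k^2 > 0" using a kp by simp
    then have x1: "-1 < k*d" using h by linarith
    have "(k*d)^2/(2*(1 + k*d)) \<le> d^2/(4*a)"
    proof -
      have pos: "1 + k*d > 0" using x1 by simp
      have "(k*d)^2 * (4*a) = k^2*d^2*(4*a)" by (simp add: power_mult_distrib)
      also have "\<dots> = d^2 * (2*(2*a*k^2))" by (simp add: algebra_simps)
      also have "\<dots> \<le> d^2 * (2*(1 + k*d))" using h by (intro mult_left_mono) auto
      finally show ?thesis using pos a by (simp add: divide_simps)
    qed
    then have "k*d - d^2/(4*a) \<le> k*d - (k*d)^2/(2*(1 + k*d))" by simp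
    then have "exp (k*d - d^2/(4*a)) \<le> exp (k*d - (k*d)^2/(2*(1 + k*d)))" by simp
    also have "\<dots> \<le> 1 + k*d" by (rule exp_le_E2[OF x1]) (use kd in simp)
    finally show ?thesis .
  qed
  show ?thesis unfolding gz using key gfun_pos[of a m]
    by (simp add: k_def[symmetric] d_def[symmetric] mult_left_mono)
qed

lemma TAN:
  assumes a: "0 < a" "a \<le> 1/2" and m: "0 \<le> m"
  shows "\<exists>s\<ge>0. \<forall>z\<ge>0. gfun a z \<le> gfun a (min m (2*a)) + s*(z - m)"
proof (cases "m \<ge> 2*a")
  case True
  then have "min m (2*a) = 2*a" by simp
  then show ?thesis using gfun_le_exp[OF a(1)] gfun_2a[OF a(1)] by (intro exI[of _ 0]) auto
next
  case False
  define k where "k = 1 - m/(2*a)"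
  have k: "0 \<le> k" unfolding k_def using a False by (auto simp: field_simps)
  have mm: "min m (2*a) = m" using False by simp
  have tl2: "gfun a z \<le> gfun a m + gfun a m * k * (z - m)" if "0 \<le> z" "z \<le> 2*a" for z
    using TL[OF a m _ that] False unfolding k_def by (simp add: algebra_simps)
  show ?thesis
  proof (intro exI[of _ "gfun a m * k"] conjI allI impI)
    show "0 \<le> gfun a m * k" using k gfun_pos[of a m] by simp
    fix z :: real assume z: "0 \<le> z"
    show "gfun a z \<le> gfun a (min m (2*a)) + gfun a m * k * (z - m)"
    proof (cases "z \<le> 2*a")
      case True then show ?thesis using tl2[OF z True] mm by simp
    next
      case False2: False
      have "gfun a z \<le> gfun a (2*a)" using gfun_le_exp[OF a(1)] gfun_2a[OF a(1)] by simp
      also have "\<dots> \<le> gfun a m + gfun a m * k * (2*a - m)" using tl2[of "2*a"] a by simp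
      also have "\<dots> \<le> gfun a m + gfun a m * k * (z - m)"
        using False2 k gfun_pos[of a m] by (intro add_left_mono mult_left_mono) auto
      finally show ?thesis using mm by simp
    qed
  qed
qed

lemma L2:
  assumes a: "0 < a" "a \<le> 1/2" and q: "a \<le> q" "q < 1" and m: "0 < m" and e: "q*e = (1-q)*m"
  shows "q * gfun a (-e) + (1-q) * gfun a (min m (2*a)) \<le> 1"
proof -
  define m' where "m' = min m (2*a)"
  define r where "r = min q (1/2)"
  have q0: "0 < q" using a q by simp
  have r: "a \<le> r" "0 < r" "r \<le> 1/2" unfolding r_def using a q by auto
  define e' where "e' = (1-q)*m'/q"
  have m'0: "0 \<le> m'" "m' \<le> m" unfolding m'_def using a m by auto
  have ee: "e = (1-q)*m/q" using e q0 by (simp add: field_simps)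
  have "e' \<le> e" unfolding ee e'_def using m'0 q q0 by (intro divide_right_mono mult_left_mono) auto
  moreover have "0 \<le> e'" unfolding e'_def using m'0 q q0 by simp
  ultimately have g1: "gfun a (-e) \<le> gfun a (-e')"
    using a by (intro gfun_mono) auto
  define t where "t = m'/(2*r)"
  have t0: "0 \<le> t" unfolding t_def using m'0 r by simp
  have m't: "m' = 2*r*t" unfolding t_def using r by simp
  have G1: "gfun r m' = exp (r*t*(2-t))"
    unfolding gfun_def m't using r by (simp add: field_simps power2_eq_square)
  have G2: "gfun r (-e') = exp (-(r*(2*(1-q)*t/q + ((1-q)*t/q)^2)))"
    unfolding gfun_def e'_def m't using r q0 by (simp add: field_simps power2_eq_square)
  have core0: "q * exp (-(r*(2*(1-q)*t/q + ((1-q)*t/q)^2))) + (1-q) * exp (r*t*(2-t)) \<le> 1"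
    unfolding r_def by (rule L2_core[OF q0 q(2) t0])
  have core: "q * gfun r (-e') + (1-q) * gfun r m' \<le> 1"
    unfolding G1 G2 by (rule core0)
  have "q * gfun a (-e) + (1-q) * gfun a m' \<le> q * gfun r (-e') + (1-q) * gfun r m'"
  proof (intro add_mono mult_left_mono)
    show "gfun a (-e) \<le> gfun r (-e')" using g1 gfun_anti[OF a(1) r(1)] by (meson order_trans)
    show "gfun a m' \<le> gfun r m'" using gfun_anti[OF a(1) r(1)] .
  qed (use q q0 in auto)
  then show ?thesis using core unfolding m'_def by simp
qed

lemma sum_split3:
  assumes "finite I"
  shows "sum f I = sum f {i\<in>I. y i < (0::real)} + sum f {i\<in>I. y i > 0} + sum f {i\<in>I. y i = 0}"
proof -
  have "I = {i\<in>I. y i < 0} \<union> {i\<in>I. y i > 0} \<union> {i\<in>I. y i = 0}" by auto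
  then have "sum f I = sum f ({i\<in>I. y i < 0} \<union> {i\<in>I. y i > 0} \<union> {i\<in>I. y i = 0})" by simp
  also have "\<dots> = sum f ({i\<in>I. y i < 0} \<union> {i\<in>I. y i > 0}) + sum f {i\<in>I. y i = 0}"
    using assms by (intro sum.union_disjoint) auto
  also have "sum f ({i\<in>I. y i < 0} \<union> {i\<in>I. y i > 0}) = sum f {i\<in>I. y i < 0} + sum f {i\<in>I. y i > 0}"
    using assms by (intro sum.union_disjoint) auto
  finally show ?thesis .
qed

lemma L_main:
  fixes p y :: "'i \<Rightarrow> real"
  assumes I: "finite I" and a: "0 < a" "a \<le> 1/2" and p: "\<And>i. i \<in> I \<Longrightarrow> a \<le> p i"
    and s1: "sum p I = 1" and s0: "(\<Sum>i\<in>I. p i * y i) = 0"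
  shows "(\<Sum>i\<in>I. p i * gfun a (y i)) \<le> 1"
proof -
  define N where "N = {i\<in>I. y i < 0}"
  define P where "P = {i\<in>I. y i > 0}"
  define Z where "Z = {i\<in>I. y i = 0}"
  have fin: "finite N" "finite P" "finite Z" unfolding N_def P_def Z_def using I by auto
  have sp: "\<And>f. sum f I = sum f N + sum f P + sum f Z" unfolding N_def P_def Z_def by (rule sum_split3[OF I])
  have pp: "\<And>i. i \<in> I \<Longrightarrow> p i > 0" using p a by (meson less_le_trans)
  define T where "T = (\<Sum>i\<in>N. p i * (- y i))"
  have sZ: "(\<Sum>i\<in>Z. p i * y i) = 0" unfolding Z_def by simp
  have sP: "(\<Sum>i\<in>P. p i * y i) = T"
    using s0 sp[of "\<lambda>i. p i * y i"] sZ unfolding T_def by (simp add: sum_negf)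
  have gZ: "(\<Sum>i\<in>Z. p i * gfun a (y i)) = sum p Z" unfolding Z_def gfun_def by simp
  show ?thesis
  proof (cases "N = {}")
    case True
    then have "T = 0" unfolding T_def by simp
    have "P = {}"
    proof (rule ccontr)
      assume "P \<noteq> {}"
      then have "(\<Sum>i\<in>P. p i * y i) > 0" using fin pp unfolding P_def by (intro sum_pos) auto
      then show False using sP \<open>T = 0\<close> by simp
    qed
    then have "(\<Sum>i\<in>I. p i * gfun a (y i)) = sum p Z" using sp[of "\<lambda>i. p i * gfun a (y i)"] True gZ by simp
    also have "\<dots> = 1" using sp[of p] True \<open>P = {}\<close> s1 by simp
    finally show ?thesis by simp
  next
    case False
    have T0: "T > 0" unfolding T_def using False fin pp unfolding N_def by (intro sum_pos) (auto simp: mult_pos_neg)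
    have Pne: "P \<noteq> {}" using sP T0 by auto
    define Pm where "Pm = sum p P"
    have Pm0: "Pm > 0" unfolding Pm_def using Pne fin pp unfolding P_def by (intro sum_pos) auto
    define m where "m = T/Pm"
    have m0: "m > 0" unfolding m_def using T0 Pm0 by simp
    define G where "G = gfun a (min m (2*a))"
    obtain sl where sl: "sl \<ge> 0" "\<And>z. z \<ge> 0 \<Longrightarrow> gfun a z \<le> G + sl*(z - m)"
      using TAN[OF a, of m] m0 unfolding G_def by auto
    have posP: "(\<Sum>i\<in>P. p i * gfun a (y i)) \<le> Pm * G"
    proof -
      have "(\<Sum>i\<in>P. p i * gfun a (y i)) \<le> (\<Sum>i\<in>P. p i * (G + sl*(y i - m)))"
        using pp sl(2) unfolding P_def by (intro sum_mono mult_left_mono) (auto intro: less_imp_le)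
      also have "\<dots> = Pm * G + sl * ((\<Sum>i\<in>P. p i * y i) - Pm * m)"
        unfolding Pm_def by (simp add: algebra_simps sum.distrib sum_distrib_left sum_subtractf sum_distrib_right)
      also have "\<dots> = Pm * G" unfolding sP m_def using Pm0 by simp
      finally show ?thesis .
    qed
    define w where "w = (\<lambda>j. Pm * (p j * (- y j)) / T)"
    have sw: "sum w N = Pm"
    proof -
      have "sum w N = (\<Sum>j\<in>N. Pm * (p j * (- y j))) / T" unfolding w_def by (rule sum_divide_distrib[symmetric])
      also have "\<dots> = Pm * T / T" unfolding T_def by (simp only: sum_distrib_left)
      finally show ?thesis using T0 by simp
    qed
    have comp: "p j * gfun a (y j) + w j * G \<le> p j + w j" if j: "j \<in> N" for j
    proof -
      have jI: "j \<in> I" and yj: "y j < 0" using j unfolding N_def by auto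
      have pj: "p j > 0" "a \<le> p j" using pp[OF jI] p[OF jI] by auto
      have pyj: "p j * (- y j) > 0" using pj yj by (intro mult_pos_pos) auto
      have "Pm * (p j * (- y j)) > 0" using Pm0 pyj by (rule mult_pos_pos)
      then have wj: "w j > 0" unfolding w_def using T0 by (rule divide_pos_pos)
      have nn: "0 \<le> p i * (- y i)" if "i \<in> N" for i
        using that pp unfolding N_def by (intro mult_nonneg_nonneg) (auto intro: less_imp_le)
      have term_le: "p j * (- y j) \<le> T" unfolding T_def
        using fin(1) j nn by (intro member_le_sum) auto
      have "Pm * (p j * (- y j)) \<le> Pm * T" using term_le Pm0 by (intro mult_left_mono) auto
      then have "w j \<le> Pm * T / T" unfolding w_def using T0 by (intro divide_right_mono) auto
      then have "w j \<le> Pm" using T0 by simp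
      moreover have "p j \<le> sum p N" using fin j pp unfolding N_def by (intro member_le_sum) (auto intro: less_imp_le)
      moreover have "sum p N + Pm \<le> 1"
      proof -
        have "sum p Z \<ge> 0" using pp unfolding Z_def by (intro sum_nonneg) (auto intro: less_imp_le)
        then show ?thesis using sp[of p] s1 unfolding Pm_def by linarith
      qed
      ultimately have tot: "p j + w j \<le> 1" by linarith
      define q where "q = p j / (p j + w j)"
      have qa: "a \<le> q"
      proof -
        have "p j \<le> q" unfolding q_def using pj wj tot by (simp add: le_divide_eq mult_left_le)
        then show ?thesis using pj by simp
      qed
      have q1: "q < 1" unfolding q_def using pj wj by simp
      have "1 - q = w j / (p j + w j)" unfolding q_def using pj wj by (simp add: field_simps)
      moreover have "p j * (- y j) = w j * m" unfolding w_def m_def using T0 Pm0 by simp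
      ultimately have eq: "q * (- y j) = (1-q) * m" unfolding q_def using pj wj by (simp add: field_simps)
      have "q * gfun a (- (- y j)) + (1-q) * G \<le> 1" unfolding G_def
        by (rule L2[OF a qa q1 m0 eq])
      then have "(p j + w j) * (q * gfun a (y j) + (1-q) * G) \<le> (p j + w j) * 1"
        using pj wj by (intro mult_left_mono) auto
      moreover have "(p j + w j) * (q * gfun a (y j) + (1-q) * G) = p j * gfun a (y j) + w j * G"
      proof -
        have h1: "(p j + w j) * q = p j" unfolding q_def using pj wj by simp
        have h2: "(p j + w j) * (1 - q) = w j" using h1 by (simp add: algebra_simps)
        have "(p j + w j) * (q * gfun a (y j) + (1-q) * G) = ((p j + w j) * q) * gfun a (y j) + ((p j + w j) * (1 - q)) * G"
          by (simp add: algebra_simps)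
        then show ?thesis unfolding h1 h2 .
      qed
      ultimately show ?thesis by simp
    qed
    have "(\<Sum>j\<in>N. p j * gfun a (y j)) + Pm * G \<le> sum p N + Pm"
    proof -
      have "(\<Sum>j\<in>N. p j * gfun a (y j) + w j * G) \<le> (\<Sum>j\<in>N. p j + w j)"
        using comp by (intro sum_mono) auto
      then show ?thesis using sw by (simp add: sum.distrib sum_distrib_right[symmetric])
    qed
    then have "(\<Sum>i\<in>I. p i * gfun a (y i)) \<le> sum p N + Pm + sum p Z"
      using sp[of "\<lambda>i. p i * gfun a (y i)"] posP gZ by simp
    also have "\<dots> = 1" using sp[of p] s1 unfolding Pm_def by simp
    finally show ?thesis .
  qed
qed

locale cubes = prob_space M for M :: "'a measure" +
  fixes F D :: "nat \<Rightarrow> 'a set set" and \<alpha> :: real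
  assumes af: "atomic_filtration M F D" and hom: "homogeneous M D \<alpha>"
    and a0: "0 < \<alpha>" and a1: "\<alpha> \<le> 1/2"
begin

lemma af1: "\<forall>n. sigma_algebra (space M) (F n) \<and> F n \<subseteq> sets M \<and> F n \<subseteq> F (Suc n)"
  using af[unfolded atomic_filtration_def] by (rule conjunct1)
lemma af2: "F 0 = {{}, space M}"
  using af[unfolded atomic_filtration_def] by (elim conjE)
lemma af4: "\<forall>n. countable (D n) \<and> disjoint (D n) \<and> D n \<subseteq> F n \<and> (\<forall>A\<in>F n. \<exists>C\<subseteq>D n. A = \<Union>C)"
  using af[unfolded atomic_filtration_def] by (elim conjE)

lemma F_sets: "F n \<subseteq> sets M" using af1 by blast
lemma F_mono: "F n \<subseteq> F (Suc n)" using af1 by blast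
lemma D_F: "D n \<subseteq> F n" using af4 by blast
lemma D_disjoint: "disjoint (D n)" using af4 by blast

lemma D_sets: "Q \<in> D n \<Longrightarrow> Q \<in> sets M"
  using D_F F_sets by blast

lemma D_sub_space: "Q \<in> D n \<Longrightarrow> Q \<subseteq> space M"
  using D_sets sets.sets_into_space by blast

lemma F_union: "A \<in> F n \<Longrightarrow> \<exists>C\<subseteq>D n. A = \<Union>C"
  using af4 by blast

lemma space_F: "space M \<in> F n"
proof -
  have "sigma_algebra (space M) (F n)" using af1 by blast
  then interpret S: sigma_algebra "space M" "F n" .
  show ?thesis by (rule S.top)
qed

lemma D_cover: "x \<in> space M \<Longrightarrow> \<exists>Q\<in>D n. x \<in> Q"
  using F_union[OF space_F[of n]] by blast

lemma D_disj: "Q \<in> D n \<Longrightarrow> Q' \<in> D n \<Longrightarrow> x \<in> Q \<Longrightarrow> x \<in> Q' \<Longrightarrow> Q = Q'"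
  using D_disjoint[of n] unfolding disjoint_def by blast

lemma D_F_Suc: "Q \<in> D n \<Longrightarrow> Q \<in> F (Suc n)"
  using D_F F_mono by blast

lemma D_sub: "Q \<in> D n \<Longrightarrow> x \<in> Q \<Longrightarrow> \<exists>R\<in>D (Suc n). x \<in> R \<and> R \<subseteq> Q"
  using F_union[OF D_F_Suc] by blast

lemma D_parent: "R \<in> D (Suc n) \<Longrightarrow> x \<in> R \<Longrightarrow> \<exists>Q\<in>D n. R \<subseteq> Q"
proof -
  assume R: "R \<in> D (Suc n)" "x \<in> R"
  then have "x \<in> space M" using D_sub_space by blast
  then obtain Q where Q: "Q \<in> D n" "x \<in> Q" using D_cover by blast
  then obtain R' where "R' \<in> D (Suc n)" "x \<in> R'" "R' \<subseteq> Q" using D_sub by blast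
  then have "R = R'" using D_disj R by blast
  then show ?thesis using Q \<open>R' \<subseteq> Q\<close> by blast
qed

lemma D0: "Q \<in> D 0 \<Longrightarrow> Q = {} \<or> Q = space M"
  using D_F[of 0] af2 by blast

lemma hom': "Q \<in> D n \<Longrightarrow> R \<in> D (Suc n) \<Longrightarrow> R \<subseteq> Q \<Longrightarrow> measure M R \<ge> \<alpha> * measure M Q"
  using hom unfolding homogeneous_def children_def by blast

lemma D_measure: "Q \<in> D n \<Longrightarrow> Q \<noteq> {} \<Longrightarrow> measure M Q \<ge> \<alpha>^n"
proof (induction n arbitrary: Q)
  case 0
  then have "Q = space M" using D0 by blast
  then show ?case by (simp add: prob_space)
next
  case (Suc n)
  then obtain x where x: "x \<in> Q" by blast
  obtain P where P: "P \<in> D n" "Q \<subseteq> P" using D_parent[OF Suc.prems(1) x] by blast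
  then have "P \<noteq> {}" using x by blast
  then have "measure M P \<ge> \<alpha>^n" using Suc.IH P by blast
  moreover have "measure M Q \<ge> \<alpha> * measure M P" using hom' P Suc.prems by blast
  moreover have "\<alpha> * \<alpha>^n \<le> \<alpha> * measure M P" using a0 calculation(1) by (intro mult_left_mono) auto
  ultimately show ?case by simp
qed

lemma D_pos: "Q \<in> D n \<Longrightarrow> Q \<noteq> {} \<Longrightarrow> measure M Q > 0"
proof -
  assume "Q \<in> D n" "Q \<noteq> {}"
  then have "measure M Q \<ge> \<alpha>^n" by (rule D_measure)
  moreover have "\<alpha>^n > 0" using a0 by simp
  ultimately show ?thesis by linarith
qed

lemma space_ne: "space M \<noteq> {}"
  using prob_space not_empty by blast

lemma empty_notin: "{} \<notin> D (Suc n)"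
proof
  assume e: "{} \<in> D (Suc n)"
  obtain x where x: "x \<in> space M" using space_ne by blast
  obtain Q where Q: "Q \<in> D n" "x \<in> Q" using D_cover[OF x] by blast
  have "measure M {} \<ge> \<alpha> * measure M Q" using hom'[OF Q(1) e] by simp
  moreover have "Q \<noteq> {}" using Q(2) by blast
  then have "\<alpha> * measure M Q > 0" using mult_pos_pos[OF a0 D_pos[OF Q(1)]] by blast
  ultimately show False by simp
qed

lemma D_finite: "finite (D n)"
proof -
  define C where "C = nat (floor (1 / \<alpha>^n))"
  have "finite (D n - {{}}) \<and> card (D n - {{}}) \<le> C"
  proof (rule finite_if_finite_subsets_card_bdd)
    fix G assume G: "G \<subseteq> D n - {{}}" "finite G"
    have "(\<Sum>Q\<in>G. measure M Q) = measure M (\<Union>Q\<in>G. Q)"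
    proof (rule finite_measure_finite_Union[symmetric])
      show "finite G" by fact
      show "(\<lambda>Q. Q) ` G \<subseteq> sets M" using G D_sets by blast
      show "disjoint_family_on (\<lambda>Q. Q) G"
        unfolding disjoint_family_on_def using G D_disj by blast
    qed
    also have "\<dots> \<le> 1" by (rule prob_le_1)
    finally have s1: "(\<Sum>Q\<in>G. measure M Q) \<le> 1" .
    have "(\<Sum>Q\<in>G. \<alpha>^n) \<le> (\<Sum>Q\<in>G. measure M Q)"
      using G D_measure by (intro sum_mono) blast
    then have "real (card G) * \<alpha>^n \<le> 1" using s1 by simp
    then have "real (card G) \<le> 1 / \<alpha>^n" using a0 by (simp add: field_simps)
    then show "card G \<le> C" unfolding C_def by linarith
  qed
  then have "finite (D n - {{}})" by blast
  moreover have "D n \<subseteq> insert {} (D n - {{}})" by blast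
  ultimately show ?thesis by (meson finite_insert finite_subset)
qed

end

context cubes begin

definition cube :: "nat \<Rightarrow> 'a \<Rightarrow> 'a set" where
  "cube n x = (THE Q. Q \<in> D n \<and> x \<in> Q)"

lemma cube_eq: assumes "Q \<in> D n" "x \<in> Q" shows "cube n x = Q"
  unfolding cube_def
proof (rule the_equality)
  show "Q \<in> D n \<and> x \<in> Q" using assms by blast
  fix Q' assume "Q' \<in> D n \<and> x \<in> Q'"
  then show "Q' = Q" using D_disj assms by blast
qed

lemma cube: assumes "x \<in> space M" shows "cube n x \<in> D n" "x \<in> cube n x"
proof -
  obtain Q where "Q \<in> D n" "x \<in> Q" using D_cover[OF assms] by blast
  then show "cube n x \<in> D n" "x \<in> cube n x" using cube_eq by auto
qed

lemma cube_Suc: assumes "x \<in> space M" shows "cube (Suc n) x \<subseteq> cube n x"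
proof -
  obtain R where R: "R \<in> D (Suc n)" "x \<in> R" "R \<subseteq> cube n x" using D_sub[OF cube[OF assms]] by blast
  then show ?thesis using cube_eq[OF R(1,2)] by simp
qed

lemma cube_mono: assumes "k \<le> n" "x \<in> space M" shows "cube n x \<subseteq> cube k x"
  using assms(1)
proof (induction n rule: dec_induct)
  case base then show ?case by simp
next
  case (step m) then show ?case using cube_Suc[OF assms(2), of m] by blast
qed

lemma cube_same:
  assumes "x \<in> space M" "y \<in> space M" "cube n x = cube n y" "k \<le> n"
  shows "cube k x = cube k y"
proof -
  have "y \<in> cube k x" using cube(2)[OF assms(2), of n] assms(3) cube_mono[OF assms(4,1)] by blast
  then show ?thesis using cube_eq[OF cube(1)[OF assms(1)]] by simp
qed

lemma ch_D: "R \<in> children D n Q \<Longrightarrow> R \<in> D (Suc n) \<and> R \<subseteq> Q"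
  unfolding children_def by blast

lemma ch_sets: "R \<in> children D n Q \<Longrightarrow> R \<in> sets M"
  using ch_D D_sets by blast

lemma ch_fin: "finite (children D n Q)"
  using D_finite[of "Suc n"] unfolding children_def by simp

lemma ch_cube: assumes "Q \<in> D n" "x \<in> Q" shows "cube (Suc n) x \<in> children D n Q"
proof -
  have x: "x \<in> space M" using assms D_sub_space by blast
  have "cube n x = Q" using cube_eq assms by blast
  then show ?thesis unfolding children_def using cube[OF x, of "Suc n"] cube_Suc[OF x, of n] by blast
qed

lemma ch_mem: "R \<in> children D n Q \<Longrightarrow> x \<in> R \<Longrightarrow> R = cube (Suc n) x"
proof -
  assume "R \<in> children D n Q" "x \<in> R"
  then have "R \<in> D (Suc n)" "x \<in> R" using ch_D by auto
  then show ?thesis using cube_eq by simp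
qed

lemma sum_cube:
  assumes x: "x \<in> space M"
  shows "(\<Sum>Q\<in>D n. f Q * indicator Q x) = (f (cube n x) :: real)"
proof -
  have "(\<Sum>Q\<in>D n. f Q * indicator Q x) = (\<Sum>Q\<in>D n. if Q = cube n x then f Q else 0)"
  proof (rule sum.cong[OF refl])
    fix Q assume Q: "Q \<in> D n"
    show "f Q * indicator Q x = (if Q = cube n x then f Q else 0)"
    proof (cases "x \<in> Q")
      case True then have "Q = cube n x" using cube_eq[OF Q] by simp
      then show ?thesis using True by simp
    next
      case False then have "Q \<noteq> cube n x" using cube(2)[OF x, of n] by blast
      then show ?thesis using False by simp
    qed
  qed
  also have "\<dots> = f (cube n x)" using D_finite cube[OF x, of n] by simp
  finally show ?thesis .
qed

lemma sum_ch:
  assumes Q: "Q \<in> D n"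
  shows "(\<Sum>R\<in>children D n Q. f R * indicator R x) = (if x \<in> Q then f (cube (Suc n) x) else (0::real))"
proof (cases "x \<in> Q")
  case True
  have "(\<Sum>R\<in>children D n Q. f R * indicator R x) = (\<Sum>R\<in>children D n Q. if R = cube (Suc n) x then f R else 0)"
  proof (rule sum.cong[OF refl])
    fix R assume R: "R \<in> children D n Q"
    have x: "x \<in> space M" using True Q D_sub_space by blast
    show "f R * indicator R x = (if R = cube (Suc n) x then f R else 0)"
    proof (cases "x \<in> R")
      case True then have "R = cube (Suc n) x" using ch_mem[OF R] by simp
      then show ?thesis using True by simp
    next
      case False then have "R \<noteq> cube (Suc n) x" using cube(2)[OF x, of "Suc n"] by blast
      then show ?thesis using False by simp
    qed
  qed
  also have "\<dots> = f (cube (Suc n) x)" using ch_fin ch_cube[OF Q True] by simp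
  finally show ?thesis using True by simp
next
  case False
  then have "\<And>R. R \<in> children D n Q \<Longrightarrow> indicator R x = (0::real)" using ch_D by (auto simp: indicator_def)
  then show ?thesis using False by simp
qed

lemma ind_ch: "Q \<in> D n \<Longrightarrow> indicator Q x = (\<Sum>R\<in>children D n Q. indicator R x :: real)"
  using sum_ch[of Q n "\<lambda>_. 1" x] by (simp add: indicator_def)

lemma D_Suc_UN: "D (Suc n) = (\<Union>Q\<in>D n. children D n Q)"
proof
  show "D (Suc n) \<subseteq> (\<Union>Q\<in>D n. children D n Q)"
  proof
    fix R assume R: "R \<in> D (Suc n)"
    have "R \<noteq> {}" using R empty_notin by blast
    then obtain x where "x \<in> R" by blast
    then obtain Q where "Q \<in> D n" "R \<subseteq> Q" using D_parent[OF R] by blast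
    then show "R \<in> (\<Union>Q\<in>D n. children D n Q)" using R unfolding children_def by blast
  qed
  show "(\<Union>Q\<in>D n. children D n Q) \<subseteq> D (Suc n)" using ch_D by blast
qed

lemma sum_regroup: "(\<Sum>R\<in>D (Suc n). f R) = (\<Sum>Q\<in>D n. \<Sum>R\<in>children D n Q. f R)"
proof -
  have "(\<Sum>R\<in>D (Suc n). f R) = (\<Sum>R\<in>(\<Union>Q\<in>D n. children D n Q). f R)" using D_Suc_UN by simp
  also have "\<dots> = (\<Sum>Q\<in>D n. \<Sum>R\<in>children D n Q. f R)"
  proof (rule sum.UNION_disjoint[OF D_finite])
    show "\<forall>Q\<in>D n. finite (children D n Q)" using ch_fin by blast
    show "\<forall>Q\<in>D n. \<forall>Q'\<in>D n. Q \<noteq> Q' \<longrightarrow> children D n Q \<inter> children D n Q' = {}"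
    proof (intro ballI impI)
      fix Q Q' assume QQ: "Q \<in> D n" "Q' \<in> D n" "Q \<noteq> Q'"
      show "children D n Q \<inter> children D n Q' = {}"
      proof (rule ccontr)
        assume "children D n Q \<inter> children D n Q' \<noteq> {}"
        then obtain R where R: "R \<in> children D n Q" "R \<in> children D n Q'" by blast
        then have "R \<in> D (Suc n)" using ch_D by blast
        then have "R \<noteq> {}" using empty_notin by blast
        then obtain x where "x \<in> R" by blast
        then show False using R ch_D D_disj QQ by blast
      qed
    qed
  qed
  finally show ?thesis .
qed

definition rep :: "'a set \<Rightarrow> 'a" where "rep Q = (SOME x. x \<in> Q)"

lemma rep: "Q \<noteq> {} \<Longrightarrow> rep Q \<in> Q"
  unfolding rep_def by (rule someI_ex) blast

definition lc :: "nat \<Rightarrow> ('a \<Rightarrow> real) \<Rightarrow> bool" where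
  "lc n u \<longleftrightarrow> (\<forall>x\<in>space M. \<forall>y\<in>space M. cube n x = cube n y \<longrightarrow> u x = u y)"

lemma lc_mono: "k \<le> n \<Longrightarrow> lc k u \<Longrightarrow> lc n u"
  unfolding lc_def using cube_same by blast

lemma lcD: "lc n u \<Longrightarrow> x \<in> space M \<Longrightarrow> y \<in> space M \<Longrightarrow> cube n x = cube n y \<Longrightarrow> u x = u y"
  unfolding lc_def by blast

lemma rep_cube: assumes "Q \<in> D n" "Q \<noteq> {}" shows "rep Q \<in> space M" "cube n (rep Q) = Q"
  using rep[OF assms(2)] D_sub_space[OF assms(1)] cube_eq[OF assms(1)] by auto

lemma DI_pt:
  assumes "lc n u" "x \<in> space M"
  shows "u x = (\<Sum>Q\<in>D n. u (rep Q) * indicator Q x)"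
proof -
  have ne: "cube n x \<noteq> {}" using cube(2)[OF assms(2)] by blast
  have "u (rep (cube n x)) = u x"
    using lcD[OF assms(1) rep_cube(1)[OF cube(1)[OF assms(2)] ne] assms(2)] rep_cube(2)[OF cube(1)[OF assms(2)] ne]
    by simp
  then show ?thesis using sum_cube[OF assms(2), where n=n and f="\<lambda>Q. u (rep Q)"] by simp
qed

lemma DI:
  assumes "lc n u"
  shows "integrable M u" "integral\<^sup>L M u = (\<Sum>Q\<in>D n. u (rep Q) * measure M Q)"
proof -
  have int1: "integrable M (\<lambda>x. \<Sum>Q\<in>D n. u (rep Q) * indicator Q x)"
    using D_sets by (intro Bochner_Integration.integrable_sum Bochner_Integration.integrable_mult_right integrable_real_indicator) (auto simp: less_top[symmetric])
  have "integrable M u = integrable M (\<lambda>x. \<Sum>Q\<in>D n. u (rep Q) * indicator Q x)"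
    by (rule Bochner_Integration.integrable_cong[OF refl]) (rule DI_pt[OF assms])
  then show "integrable M u" using int1 by simp
  have "integral\<^sup>L M u = integral\<^sup>L M (\<lambda>x. \<Sum>Q\<in>D n. u (rep Q) * indicator Q x)"
    by (rule Bochner_Integration.integral_cong[OF refl DI_pt[OF assms]])
  also have "\<dots> = (\<Sum>Q\<in>D n. integral\<^sup>L M (\<lambda>x. u (rep Q) * indicator Q x))"
    using D_sets by (intro Bochner_Integration.integral_sum Bochner_Integration.integrable_mult_right integrable_real_indicator) (auto simp: less_top[symmetric])
  also have "\<dots> = (\<Sum>Q\<in>D n. u (rep Q) * measure M Q)"
    using D_sets by (intro sum.cong refl) (simp add: Int_absorb2 D_sub_space)
  finally show "integral\<^sup>L M u = (\<Sum>Q\<in>D n. u (rep Q) * measure M Q)" .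
qed

lemma lc_meas: "lc n u \<Longrightarrow> u \<in> borel_measurable M"
  using DI(1) by blast

definition hn :: "('a \<Rightarrow> real) \<Rightarrow> nat \<Rightarrow> 'a \<Rightarrow> real" where
  "hn h n x = avg M h (cube n x)"

lemma lc_hn: "k \<le> n \<Longrightarrow> lc n (hn h k)"
proof -
  assume k: "k \<le> n"
  show "lc n (hn h k)" unfolding lc_def hn_def
  proof (intro ballI impI)
    fix x y assume "x \<in> space M" "y \<in> space M" "cube n x = cube n y"
    then have "cube k x = cube k y" using cube_same k by blast
    then show "avg M h (cube k x) = avg M h (cube k y)" by simp
  qed
qed

lemma ch_measure: assumes "Q \<in> D n" shows "(\<Sum>R\<in>children D n Q. measure M R) = measure M Q"
proof -
  have e: "(indicator Q :: 'a \<Rightarrow> real) = (\<lambda>x. \<Sum>R\<in>children D n Q. indicator R x :: real)"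
    by (rule ext) (rule ind_ch[OF assms])
  have "measure M Q = integral\<^sup>L M (indicator Q :: 'a \<Rightarrow> real)"
    using D_sub_space[OF assms] by (simp add: Int_absorb2)
  also have "\<dots> = integral\<^sup>L M (\<lambda>x. \<Sum>R\<in>children D n Q. indicator R x :: real)"
    by (simp only: e)
  also have "\<dots> = (\<Sum>R\<in>children D n Q. integral\<^sup>L M (indicator R :: 'a \<Rightarrow> real))"
    using ch_sets by (intro Bochner_Integration.integral_sum integrable_real_indicator) (auto simp: less_top[symmetric])
  also have "\<dots> = (\<Sum>R\<in>children D n Q. measure M R)"
    using ch_sets sets.sets_into_space by (intro sum.cong refl) (simp add: Int_absorb2)
  finally show ?thesis by simp
qed

lemma ch_int:
  fixes h :: "'a \<Rightarrow> real"
  assumes h: "integrable M h" and Q: "Q \<in> D n"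
  shows "(\<Sum>R\<in>children D n Q. set_lebesgue_integral M R h) = set_lebesgue_integral M Q h"
proof -
  have "(\<Sum>R\<in>children D n Q. set_lebesgue_integral M R h) = (\<Sum>R\<in>children D n Q. integral\<^sup>L M (\<lambda>x. indicator R x * h x))"
    unfolding set_lebesgue_integral_def by simp
  also have "\<dots> = integral\<^sup>L M (\<lambda>x. \<Sum>R\<in>children D n Q. indicator R x * h x)"
  proof (intro Bochner_Integration.integral_sum[symmetric])
    fix R assume "R \<in> children D n Q"
    then have "R \<in> sets M" using ch_D D_sets by blast
    from integrable_mult_indicator[OF this h] show "integrable M (\<lambda>x. indicator R x * h x)" by simp
  qed
  also have "\<dots> = integral\<^sup>L M (\<lambda>x. indicator Q x * h x)"
    using ind_ch[OF Q] by (simp add: sum_distrib_right)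
  finally show ?thesis unfolding set_lebesgue_integral_def by simp
qed

lemma avg_mul: "measure M R > 0 \<Longrightarrow> measure M R * avg M h R = set_lebesgue_integral M R h"
  unfolding avg_def by simp

end

context cubes begin

lemma lc_fun:
  assumes "\<And>x y. x \<in> space M \<Longrightarrow> y \<in> space M \<Longrightarrow> (\<forall>k\<le>n. cube k x = cube k y) \<Longrightarrow> u x = u y"
  shows "lc n u"
  unfolding lc_def
proof (intro ballI impI)
  fix x y assume xy: "x \<in> space M" "y \<in> space M" "cube n x = cube n y"
  have "\<forall>k\<le>n. cube k x = cube k y"
  proof (intro allI impI)
    fix k assume "k \<le> n" then show "cube k x = cube k y" using cube_same[OF xy] by blast
  qed
  then show "u x = u y" using assms xy by blast
qed

definition ss :: "('a \<Rightarrow> real) \<Rightarrow> nat \<Rightarrow> 'a \<Rightarrow> real" where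
  "ss h n x = (\<Sum>k<n. (hn h (Suc k) x - hn h k x)^2)"

definition Z :: "('a \<Rightarrow> real) \<Rightarrow> real \<Rightarrow> nat \<Rightarrow> 'a \<Rightarrow> real" where
  "Z h t n x = exp (t * hn h n x - t^2/(4*\<alpha>) * ss h n x)"

lemma hn_cong: "cube k x = cube k y \<Longrightarrow> hn h k x = hn h k y"
  unfolding hn_def by simp

lemma ss_cong: "\<forall>k\<le>n. cube k x = cube k y \<Longrightarrow> ss h n x = ss h n y"
  unfolding ss_def
proof (intro sum.cong refl)
  fix k assume a: "\<forall>k\<le>n. cube k x = cube k y" and k: "k \<in> {..<n}"
  then have "cube k x = cube k y" "cube (Suc k) x = cube (Suc k) y" by auto
  then show "(hn h (Suc k) x - hn h k x)^2 = (hn h (Suc k) y - hn h k y)^2" unfolding hn_def by simp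
qed

lemma Z_cong: "\<forall>k\<le>n. cube k x = cube k y \<Longrightarrow> Z h t n x = Z h t n y"
proof -
  assume a: "\<forall>k\<le>n. cube k x = cube k y"
  have "ss h n x = ss h n y" by (rule ss_cong[OF a])
  moreover have "hn h n x = hn h n y" using a by (intro hn_cong) auto
  ultimately
  show ?thesis unfolding Z_def by simp
qed

lemma lc_Z: "lc n (Z h t n)"
  by (rule lc_fun) (rule Z_cong)

lemma Z_pos: "Z h t n x > 0" unfolding Z_def by simp

lemma Z_Suc: "Z h t (Suc n) x = Z h t n x * gfun \<alpha> (t * (hn h (Suc n) x - hn h n x))"
proof -
  define d where "d = hn h (Suc n) x - hn h n x"
  have s: "ss h (Suc n) x = ss h n x + d^2" unfolding ss_def d_def by simp
  have hs: "hn h (Suc n) x = hn h n x + d" unfolding d_def by simp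
  have sq: "(t * d)^2 = t^2 * d^2" by (simp add: power_mult_distrib)
  have "t * hn h (Suc n) x - t^2/(4*\<alpha>) * ss h (Suc n) x
      = (t * hn h n x - t^2/(4*\<alpha>) * ss h n x) + (t * d - (t * d)^2/(4*\<alpha>))"
    unfolding s hs sq by (simp add: algebra_simps add_divide_distrib)
  then show ?thesis unfolding Z_def gfun_def d_def[symmetric] by (simp add: exp_add)
qed

lemma step:
  fixes h :: "'a \<Rightarrow> real"
  assumes h: "integrable M h" and u: "lc n u" and u0: "\<And>x. x \<in> space M \<Longrightarrow> u x \<ge> 0"
  shows "integral\<^sup>L M (\<lambda>x. u x * Z h t (Suc n) x) \<le> integral\<^sup>L M (\<lambda>x. u x * Z h t n x)"
proof -
  have lcA: "lc (Suc n) (\<lambda>x. u x * Z h t (Suc n) x)"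
  proof (rule lc_fun)
    fix x y assume xy: "x \<in> space M" "y \<in> space M" "\<forall>k\<le>Suc n. cube k x = cube k y"
    have "cube n x = cube n y" using xy(3) by simp
    then have "u x = u y" using lcD[OF u xy(1,2)] by simp
    then show "u x * Z h t (Suc n) x = u y * Z h t (Suc n) y" using Z_cong[OF xy(3)] by simp
  qed
  have lcB: "lc n (\<lambda>x. u x * Z h t n x)"
  proof (rule lc_fun)
    fix x y assume xy: "x \<in> space M" "y \<in> space M" "\<forall>k\<le>n. cube k x = cube k y"
    have "cube n x = cube n y" using xy(3) by simp
    then have "u x = u y" using lcD[OF u xy(1,2)] by simp
    then show "u x * Z h t n x = u y * Z h t n y" using Z_cong[OF xy(3)] by simp
  qed
  define W where "W = (\<lambda>R. u (rep R) * Z h t (Suc n) (rep R) * measure M R)"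
  have "integral\<^sup>L M (\<lambda>x. u x * Z h t (Suc n) x) = (\<Sum>R\<in>D (Suc n). W R)"
    unfolding W_def using DI(2)[OF lcA] by simp
  also have "\<dots> = (\<Sum>Q\<in>D n. \<Sum>R\<in>children D n Q. W R)" by (rule sum_regroup)
  also have "\<dots> \<le> (\<Sum>Q\<in>D n. u (rep Q) * Z h t n (rep Q) * measure M Q)"
  proof (rule sum_mono)
    fix Q assume Q: "Q \<in> D n"
    show "(\<Sum>R\<in>children D n Q. W R) \<le> u (rep Q) * Z h t n (rep Q) * measure M Q"
    proof (cases "Q = {}")
      case True
      then have "children D n Q = {}" using ch_D empty_notin by fastforce
      then show ?thesis using True by simp
    next
      case False
      define rq where "rq = rep Q"
      have rq: "rq \<in> space M" "cube n rq = Q" "rq \<in> Q" using rep_cube[OF Q False] rep[OF False] unfolding rq_def by auto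
      have mQ: "measure M Q > 0" using D_pos[OF Q False] .
      define c where "c = u rq * Z h t n rq"
      have c0: "c \<ge> 0" unfolding c_def using u0[OF rq(1)] Z_pos[of h t n rq] by simp
      define y where "y = (\<lambda>R. t * (avg M h R - avg M h Q))"
      have WR: "W R = c * (measure M R * gfun \<alpha> (y R))" if R: "R \<in> children D n Q" for R
      proof -
        have RD: "R \<in> D (Suc n)" "R \<subseteq> Q" using ch_D[OF R] by auto
        then have Rne: "R \<noteq> {}" using empty_notin by blast
        have rR: "rep R \<in> space M" "cube (Suc n) (rep R) = R" using rep_cube[OF RD(1) Rne] by auto
        have rRQ: "rep R \<in> Q" using rep[OF Rne] RD(2) by blast
        have cn: "cube n (rep R) = Q" using cube_eq[OF Q rRQ] .
        have "u (rep R) = u rq" using lcD[OF u rR(1) rq(1)] cn rq(2) by simp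
        moreover have "Z h t n (rep R) = Z h t n rq" using lcD[OF lc_Z rR(1) rq(1)] cn rq(2) by simp
        moreover have "hn h (Suc n) (rep R) = avg M h R" unfolding hn_def rR(2) ..
        moreover have "hn h n (rep R) = avg M h Q" unfolding hn_def cn ..
        ultimately show ?thesis unfolding W_def c_def y_def Z_Suc by (simp add: algebra_simps)
      qed
      have "(\<Sum>R\<in>children D n Q. W R) = c * (\<Sum>R\<in>children D n Q. measure M R * gfun \<alpha> (y R))"
        using WR by (simp add: sum_distrib_left)
      also have "(\<Sum>R\<in>children D n Q. measure M R * gfun \<alpha> (y R)) \<le> measure M Q"
      proof -
        define p where "p = (\<lambda>R. measure M R / measure M Q)"
        have pa: "\<alpha> \<le> p R" if R: "R \<in> children D n Q" for R
          using hom'[OF Q, of R] ch_D[OF R] mQ unfolding p_def by (simp add: le_divide_eq)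
        have sp: "sum p (children D n Q) = 1"
          unfolding p_def using ch_measure[OF Q] mQ by (simp add: sum_divide_distrib[symmetric])
        have mR: "measure M R * avg M h R = set_lebesgue_integral M R h" if R: "R \<in> children D n Q" for R
        proof -
          have "R \<in> D (Suc n)" "R \<noteq> {}" using ch_D[OF R] empty_notin by auto
          then show ?thesis using avg_mul D_pos by blast
        qed
        have spy: "(\<Sum>R\<in>children D n Q. p R * y R) = 0"
        proof -
          have "(\<Sum>R\<in>children D n Q. p R * y R) = t / measure M Q * ((\<Sum>R\<in>children D n Q. measure M R * avg M h R) - (\<Sum>R\<in>children D n Q. measure M R) * avg M h Q)"
            unfolding p_def y_def by (simp add: sum_distrib_left sum_distrib_right sum_subtractf algebra_simps)
          also have "(\<Sum>R\<in>children D n Q. measure M R * avg M h R) = set_lebesgue_integral M Q h"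
            using mR ch_int[OF h Q] by simp
          also have "set_lebesgue_integral M Q h = measure M Q * avg M h Q" using avg_mul[OF mQ] by simp
          finally show ?thesis using ch_measure[OF Q] by simp
        qed
        have "(\<Sum>R\<in>children D n Q. p R * gfun \<alpha> (y R)) \<le> 1"
          by (rule L_main[OF ch_fin a0 a1 pa sp spy])
        then have "measure M Q * (\<Sum>R\<in>children D n Q. p R * gfun \<alpha> (y R)) \<le> measure M Q * 1"
          using mQ by (intro mult_left_mono) auto
        moreover have "measure M Q * (\<Sum>R\<in>children D n Q. p R * gfun \<alpha> (y R)) = (\<Sum>R\<in>children D n Q. measure M R * gfun \<alpha> (y R))"
          unfolding p_def using mQ by (simp add: sum_distrib_left)
        ultimately show ?thesis by simp
      qed
      then have "c * (\<Sum>R\<in>children D n Q. measure M R * gfun \<alpha> (y R)) \<le> c * measure M Q"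
        using c0 by (intro mult_left_mono) auto
      finally show ?thesis unfolding c_def rq_def by simp
    qed
  qed
  also have "\<dots> = integral\<^sup>L M (\<lambda>x. u x * Z h t n x)"
    using DI(2)[OF lcB] by simp
  finally show ?thesis .
qed

end

context cubes begin

definition Acont :: "('a \<Rightarrow> real) \<Rightarrow> real \<Rightarrow> nat \<Rightarrow> 'a \<Rightarrow> bool" where
  "Acont h lam n x \<longleftrightarrow> (\<forall>k\<le>n. hn h k x \<le> lam)"

primrec Y :: "('a \<Rightarrow> real) \<Rightarrow> real \<Rightarrow> real \<Rightarrow> nat \<Rightarrow> 'a \<Rightarrow> real" where
  "Y h t lam 0 x = Z h t 0 x"
| "Y h t lam (Suc n) x = (if Acont h lam n x then Z h t (Suc n) x else Y h t lam n x)"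

lemma Acont_cong: "\<forall>k\<le>n. cube k x = cube k y \<Longrightarrow> Acont h lam n x = Acont h lam n y"
proof -
  assume a: "\<forall>k\<le>n. cube k x = cube k y"
  have "\<forall>k\<le>n. hn h k x = hn h k y"
  proof (intro allI impI)
    fix k assume "k \<le> n" then have "cube k x = cube k y" using a by blast
    then show "hn h k x = hn h k y" by (rule hn_cong)
  qed
  then show ?thesis unfolding Acont_def by simp
qed

lemma Y_cong: "\<forall>k\<le>n. cube k x = cube k y \<Longrightarrow> Y h t lam n x = Y h t lam n y"
proof (induction n)
  case 0 then show ?case using Z_cong[OF 0] by simp
next
  case (Suc n)
  have a: "\<forall>k\<le>n. cube k x = cube k y" using Suc.prems by simp
  have "Acont h lam n x = Acont h lam n y" by (rule Acont_cong[OF a])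
  moreover have "Z h t (Suc n) x = Z h t (Suc n) y" by (rule Z_cong[OF Suc.prems])
  moreover have "Y h t lam n x = Y h t lam n y" by (rule Suc.IH[OF a])
  ultimately show ?case by simp
qed

lemma lc_Y: "lc n (Y h t lam n)"
  by (rule lc_fun) (rule Y_cong)

definition ind :: "('a \<Rightarrow> real) \<Rightarrow> real \<Rightarrow> nat \<Rightarrow> 'a \<Rightarrow> real" where
  "ind h lam n x = (if Acont h lam n x then 1 else 0)"

lemma lc_ind: "lc n (ind h lam n)"
proof (rule lc_fun)
  fix x y assume "x \<in> space M" "y \<in> space M" "\<forall>k\<le>n. cube k x = cube k y"
  then have "Acont h lam n x = Acont h lam n y" by (intro Acont_cong) simp
  then show "ind h lam n x = ind h lam n y" unfolding ind_def by simp
qed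

lemma Y_pos: "Y h t lam n x > 0"
proof (induction n)
  case 0 then show ?case using Z_pos by simp
next
  case (Suc n) then show ?case using Z_pos[of h t "Suc n" x] by simp
qed

lemma Y_eq: "Acont h lam n x \<Longrightarrow> Y h t lam n x = Z h t n x"
proof (induction n)
  case 0 then show ?case by simp
next
  case (Suc n)
  have "Acont h lam n x" using Suc.prems unfolding Acont_def by simp
  then show ?case by simp
qed

lemma Y_Suc_eq: "Y h t lam (Suc n) x = Y h t lam n x + ind h lam n x * Z h t (Suc n) x - ind h lam n x * Z h t n x"
proof (cases "Acont h lam n x")
  case True
  then show ?thesis unfolding ind_def using Y_eq[of h lam n x t] by simp
next
  case False
  then show ?thesis unfolding ind_def by simp
qed

lemma lc_prod: "lc n u \<Longrightarrow> lc n v \<Longrightarrow> lc n (\<lambda>x. u x * v x)"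
proof -
  assume u: "lc n u" and v: "lc n v"
  show ?thesis unfolding lc_def
  proof (intro ballI impI)
    fix x y assume xy: "x \<in> space M" "y \<in> space M" "cube n x = cube n y"
    show "u x * v x = u y * v y" using lcD[OF u xy] lcD[OF v xy] by simp
  qed
qed

lemma int_Y_step:
  assumes h: "integrable M h"
  shows "integral\<^sup>L M (Y h t lam (Suc n)) \<le> integral\<^sup>L M (Y h t lam n)"
proof -
  have i1: "integrable M (Y h t lam n)" by (rule DI(1)[OF lc_Y])
  have i2: "integrable M (\<lambda>x. ind h lam n x * Z h t (Suc n) x)"
    by (rule DI(1)[OF lc_prod[OF lc_mono[OF _ lc_ind] lc_Z]]) simp
  have i3: "integrable M (\<lambda>x. ind h lam n x * Z h t n x)"
    by (rule DI(1)[OF lc_prod[OF lc_ind lc_Z]])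
  have "integral\<^sup>L M (Y h t lam (Suc n)) = integral\<^sup>L M (\<lambda>x. Y h t lam n x + ind h lam n x * Z h t (Suc n) x - ind h lam n x * Z h t n x)"
    by (rule Bochner_Integration.integral_cong[OF refl]) (rule Y_Suc_eq)
  also have "\<dots> = integral\<^sup>L M (Y h t lam n) + integral\<^sup>L M (\<lambda>x. ind h lam n x * Z h t (Suc n) x) - integral\<^sup>L M (\<lambda>x. ind h lam n x * Z h t n x)"
    using i1 i2 i3 by simp
  also have "\<dots> \<le> integral\<^sup>L M (Y h t lam n)"
    using step[OF h lc_ind[where h=h and lam=lam and n=n], where t=t] by (simp add: ind_def)
  finally show ?thesis .
qed

lemma Y_exceed: "\<not> Acont h lam n x \<Longrightarrow> \<exists>k\<le>n. Y h t lam n x = Z h t k x \<and> hn h k x > lam"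
proof (induction n)
  case 0 then show ?case by (auto simp: Acont_def)
next
  case (Suc n)
  show ?case
  proof (cases "Acont h lam n x")
    case True
    obtain k where k: "k \<le> Suc n" "hn h k x > lam" using Suc.prems unfolding Acont_def by (auto simp: not_le)
    have "k = Suc n"
    proof (rule ccontr)
      assume "k \<noteq> Suc n" then have "k \<le> n" using k(1) by simp
      then show False using True k(2) unfolding Acont_def by auto
    qed
    then have "hn h (Suc n) x > lam" using k by simp
    then show ?thesis using True by (intro exI[of _ "Suc n"]) simp
  next
    case False
    then obtain k where "k \<le> n" "Y h t lam n x = Z h t k x" "hn h k x > lam" using Suc.IH by blast
    then show ?thesis using False by (intro exI[of _ k]) simp
  qed
qed

end

context cubes begin

lemma hn0: assumes h: "integrable M h" and E0: "integral\<^sup>L M h = 0" and x: "x \<in> space M"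
  shows "hn h 0 x = 0"
proof -
  have "cube 0 x = space M" using D0[OF cube(1)[OF x]] cube(2)[OF x, of 0] by blast
  then show ?thesis unfolding hn_def avg_def using set_integral_space[OF h] E0 by simp
qed

lemma one_sided:
  fixes h :: "'a \<Rightarrow> real"
  assumes h: "integrable M h" and E0: "integral\<^sup>L M h = 0" and t: "t > 0"
    and S: "AE x in M. \<forall>N. ss h N x \<le> S^2"
  shows "{x\<in>space M. \<exists>n. hn h n x > lam} \<in> sets M"
    "measure M {x\<in>space M. \<exists>n. hn h n x > lam} \<le> exp (-(t*lam) + t^2/(4*\<alpha>)*S^2)"
proof -
  define c where "c = t^2/(4*\<alpha>)"
  have c0: "c \<ge> 0" unfolding c_def using a0 by simp
  define B where "B = exp (t*lam - c*S^2)"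
  have B0: "B > 0" unfolding B_def by simp
  have Z0: "Z h t 0 x = 1" if "x \<in> space M" for x
    unfolding Z_def ss_def using hn0[OF h E0 that] by simp
  have intY0: "integral\<^sup>L M (Y h t lam 0) = 1"
  proof -
    have "integral\<^sup>L M (Y h t lam 0) = integral\<^sup>L M (\<lambda>x. 1::real)"
      by (rule Bochner_Integration.integral_cong[OF refl]) (simp add: Z0)
    then show ?thesis by (simp add: prob_space)
  qed
  have intY: "integral\<^sup>L M (Y h t lam N) \<le> 1" for N
  proof (induction N)
    case 0 then show ?case using intY0 by (simp del: Y.simps)
  next
    case (Suc N) then show ?case using int_Y_step[OF h, of t lam N] by (simp del: Y.simps)
  qed
  have hmeas[measurable]: "hn h k \<in> borel_measurable M" for k
    by (rule lc_meas[OF lc_hn[of k k]]) simp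
  define E where "E = (\<lambda>N. {x\<in>space M. \<exists>k\<le>N. hn h k x > lam})"
  have Emeas: "E N \<in> sets M" for N unfolding E_def by measurable
  have EA: "E N = {x\<in>space M. \<not> Acont h lam N x}" for N
    unfolding E_def Acont_def by (auto simp: not_le)
  have Ebound: "measure M (E N) \<le> exp (-(t*lam) + c*S^2)" for N
  proof -
    have AEle: "AE x in M. B * indicator (E N) x \<le> Y h t lam N x"
      using S
    proof (eventually_elim)
      case (elim x)
      show ?case
      proof (cases "x \<in> E N")
        case True
        then have "\<not> Acont h lam N x" using EA by blast
        then obtain k where k: "Y h t lam N x = Z h t k x" "hn h k x > lam" using Y_exceed by blast
        have "t * lam \<le> t * hn h k x" using k(2) t by simp
        moreover have "c * ss h k x \<le> c * S^2" using elim c0 by (intro mult_left_mono) auto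
        ultimately have "t*lam - c*S^2 \<le> t * hn h k x - c * ss h k x" by linarith
        then have "B \<le> Z h t k x" unfolding B_def Z_def c_def by simp
        then show ?thesis using True k(1) by simp
      next
        case False
        then show ?thesis using Y_pos[of h t lam N x] by simp
      qed
    qed
    have "B * measure M (E N) = integral\<^sup>L M (\<lambda>x. B * indicator (E N) x)"
      using Emeas by simp
    also have "\<dots> \<le> integral\<^sup>L M (Y h t lam N)"
      using Emeas by (intro integral_mono_AE AEle DI(1)[OF lc_Y]) (auto simp: less_top[symmetric])
    also have "\<dots> \<le> 1" by (rule intY)
    finally have "B * measure M (E N) \<le> 1" .
    then have "measure M (E N) \<le> 1 / B" using B0 by (simp add: field_simps)
    also have "1 / B = exp (-(t*lam) + c*S^2)"
    proof -
      have "-(t*lam) + c*S^2 = - (t*lam - c*S^2)" by simp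
      then show ?thesis unfolding B_def by (simp only: exp_minus inverse_eq_divide)
    qed
    finally show ?thesis .
  qed
  have UE: "{x\<in>space M. \<exists>n. hn h n x > lam} = (\<Union>N. E N)"
    unfolding E_def by auto
  show "{x\<in>space M. \<exists>n. hn h n x > lam} \<in> sets M" unfolding UE using Emeas by auto
  have inc: "incseq E" unfolding E_def incseq_def by (auto intro: order_trans)
  have "(\<lambda>N. measure M (E N)) \<longlonglongrightarrow> measure M (\<Union>N. E N)"
    using Emeas inc by (intro finite_Lim_measure_incseq) auto
  then have "measure M (\<Union>N. E N) \<le> exp (-(t*lam) + c*S^2)"
    using Ebound by (intro LIMSEQ_le_const2) auto
  then show "measure M {x\<in>space M. \<exists>n. hn h n x > lam} \<le> exp (-(t*lam) + t^2/(4*\<alpha>)*S^2)"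
    unfolding UE c_def .
qed

lemma cond_exp_n_eq: "x \<in> space M \<Longrightarrow> cond_exp_n M D n f x = hn f n x"
  unfolding cond_exp_n_def cube_exp_def infsum_finite[OF D_finite] hn_def
  by (rule sum_cube)

lemma mdiff_eq:
  assumes Q: "Q \<in> D n"
  shows "mdiff M D n Q f x = (if x \<in> Q then hn f (Suc n) x - hn f n x else 0)"
proof -
  have "mdiff M D n Q f x = (\<Sum>R\<in>children D n Q. avg M f R * indicator R x) - avg M f Q * indicator Q x"
    unfolding mdiff_def cube_exp_def infsum_finite[OF ch_fin] ..
  also have "\<dots> = (if x \<in> Q then avg M f (cube (Suc n) x) else 0) - avg M f Q * indicator Q x"
    using sum_ch[OF Q] by simp
  finally show ?thesis unfolding hn_def using cube_eq[OF Q] by (simp split: if_splits)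
qed

lemma ss_le_sqfun:
  assumes x: "x \<in> space M"
  shows "ennreal (ss f N x) \<le> sqfun_sq M D f x"
proof -
  define g where "g = (\<lambda>p. ennreal ((mdiff M D (fst p) (snd p) f x)\<^sup>2))"
  define \<iota> where "\<iota> = (\<lambda>k::nat. (k, cube k x))"
  have "ennreal (ss f N x) = (\<Sum>k<N. ennreal ((hn f (Suc k) x - hn f k x)^2))"
    unfolding ss_def by (rule sum_ennreal[symmetric]) simp
  also have "\<dots> = (\<Sum>k<N. g (\<iota> k))"
  proof (rule sum.cong[OF refl])
    fix k assume "k \<in> {..<N}"
    show "ennreal ((hn f (Suc k) x - hn f k x)^2) = g (\<iota> k)"
      unfolding g_def \<iota>_def using mdiff_eq[OF cube(1)[OF x, of k], of f x] cube(2)[OF x, of k] by simp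
  qed
  also have "\<dots> = sum g (\<iota> ` {..<N})"
    by (subst sum.reindex) (auto simp: inj_on_def \<iota>_def)
  also have "\<dots> = infsum g (\<iota> ` {..<N})" by (rule infsum_finite[symmetric]) simp
  also have "\<dots> \<le> infsum g (Sigma UNIV D)"
  proof (rule infsum_mono_neutral)
    show "g summable_on Sigma UNIV D" by (rule nonneg_summable_on_complete) simp
    show "g summable_on (\<iota> ` {..<N})" by (rule nonneg_summable_on_complete) simp
    have "\<iota> ` {..<N} \<subseteq> Sigma UNIV D" unfolding \<iota>_def using cube(1)[OF x] by auto
    then show "\<And>y. y \<in> \<iota> ` {..<N} - Sigma UNIV D \<Longrightarrow> g y \<le> 0" by auto
  qed auto
  also have "\<dots> = sqfun_sq M D f x" unfolding sqfun_sq_def g_def ..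
  finally show ?thesis .
qed

lemma AE_ss:
  assumes S0: "0 \<le> S" and AE: "AE x in M. sqfun M D f x \<le> ereal S"
  shows "AE x in M. \<forall>N. ss f N x \<le> S^2"
  using AE_space AE
proof (eventually_elim)
  case (elim x)
  show ?case
  proof
    fix N
    have nt: "sqfun_sq M D f x \<noteq> \<infinity>"
    proof
      assume "sqfun_sq M D f x = \<infinity>"
      then have "sqfun M D f x = \<infinity>" unfolding sqfun_def by simp
      then show False using elim(2) by simp
    qed
    define e where "e = enn2real (sqfun_sq M D f x)"
    have e0: "0 \<le> e" unfolding e_def by simp
    have "ereal (sqrt e) \<le> ereal S" using elim(2) nt unfolding sqfun_def e_def by simp
    then have "sqrt e \<le> S" by simp
    then have "(sqrt e)^2 \<le> S^2" using e0 by (intro power_mono) auto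
    then have eS: "e \<le> S^2" using e0 by simp
    have sqe: "sqfun_sq M D f x = ennreal e" unfolding e_def using nt by (simp add: ennreal_enn2real_if)
    have "ennreal (ss f N x) \<le> ennreal e"
      using ss_le_sqfun[OF elim(1), where f=f and N=N] sqe by simp
    moreover have "ss f N x \<ge> 0" unfolding ss_def by (intro sum_nonneg) simp
    ultimately have "ss f N x \<le> e" using e0 by (simp add: ennreal_le_iff)
    then show "ss f N x \<le> S^2" using eS by simp
  qed
qed

lemma hn_neg: "hn (\<lambda>x. - f x) n x = - hn f n x"
  unfolding hn_def avg_def set_lebesgue_integral_def by simp

lemma ss_neg: "ss (\<lambda>x. - f x) n x = ss f n x"
  unfolding ss_def hn_neg by (simp add: power2_commute algebra_simps)

lemma final:
  assumes f: "integrable M f" and E0: "integral\<^sup>L M f = 0"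
    and fin: "esssup M (sqfun M D f) < \<infinity>" and lam: "lam > 0"
  shows "measure M {x \<in> space M. maxfun M D f x > ereal lam}
           \<le> (if esssup M (sqfun M D f) = 0 then 0
               else 2 * exp (- \<alpha> * lam\<^sup>2 / (real_of_ereal (esssup M (sqfun M D f)))\<^sup>2))"
proof -
  define Se where "Se = esssup M (sqfun M D f)"
  have AEs: "AE x in M. sqfun M D f x \<le> Se" unfolding Se_def by (rule esssup_AE)
  have sq0: "0 \<le> sqfun M D f x" for x unfolding sqfun_def by simp
  have "AE x in M. 0 \<le> Se" using AEs by eventually_elim (use sq0 in \<open>rule order_trans\<close>)
  then have Se0: "0 \<le> Se" by (simp add: AE_const)
  define S where "S = real_of_ereal Se"
  have n1: "Se \<noteq> \<infinity>" using fin unfolding Se_def by simp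
  have n2: "Se \<noteq> -\<infinity>" using Se0 by auto
  have SeS: "Se = ereal S" unfolding S_def using n1 n2 by (cases Se) auto
  have S0: "0 \<le> S" using Se0 SeS by simp
  have AE1: "AE x in M. \<forall>N. ss f N x \<le> S^2" by (rule AE_ss[OF S0]) (use AEs SeS in simp)
  have AE2: "AE x in M. \<forall>N. ss (\<lambda>x. - f x) N x \<le> S^2" using AE1 by (simp add: ss_neg)
  have fm: "integrable M (\<lambda>x. - f x)" using f by simp
  have E0m: "integral\<^sup>L M (\<lambda>x. - f x) = 0" using E0 by simp
  define A1 where "A1 = {x\<in>space M. \<exists>n. hn f n x > lam}"
  define A2 where "A2 = {x\<in>space M. \<exists>n. hn (\<lambda>x. - f x) n x > lam}"
  have A1m: "A1 \<in> sets M" unfolding A1_def by (rule one_sided(1)[OF f E0 zero_less_one AE1])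
  have A2m: "A2 \<in> sets M" unfolding A2_def by (rule one_sided(1)[OF fm E0m zero_less_one AE2])
  have sub: "{x \<in> space M. maxfun M D f x > ereal lam} \<subseteq> A1 \<union> A2"
  proof
    fix x assume "x \<in> {x \<in> space M. maxfun M D f x > ereal lam}"
    then have x: "x \<in> space M" and gt: "ereal lam < (SUP n. ereal \<bar>cond_exp_n M D n f x\<bar>)"
      unfolding maxfun_def by auto
    then obtain n where "ereal lam < ereal \<bar>cond_exp_n M D n f x\<bar>" by (auto simp: less_SUP_iff)
    then have "lam < \<bar>hn f n x\<bar>" using cond_exp_n_eq[OF x] by simp
    then have "lam < hn f n x \<or> lam < hn (\<lambda>x. - f x) n x" unfolding hn_neg by (auto simp: abs_if split: if_splits)
    then show "x \<in> A1 \<union> A2" unfolding A1_def A2_def using x by auto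
  qed
  have bound: "measure M {x \<in> space M. maxfun M D f x > ereal lam} \<le> 2 * exp (-(t*lam) + t^2/(4*\<alpha>)*S^2)"
    if t: "t > 0" for t
  proof -
    have "measure M {x \<in> space M. maxfun M D f x > ereal lam} \<le> measure M (A1 \<union> A2)"
      using sub A1m A2m by (intro finite_measure_mono) auto
    also have "\<dots> \<le> measure M A1 + measure M A2" using A1m A2m by (rule measure_Un_le)
    also have "\<dots> \<le> exp (-(t*lam) + t^2/(4*\<alpha>)*S^2) + exp (-(t*lam) + t^2/(4*\<alpha>)*S^2)"
      unfolding A1_def A2_def
      by (intro add_mono one_sided(2)[OF f E0 t AE1] one_sided(2)[OF fm E0m t AE2])
    finally show ?thesis by simp
  qed
  show ?thesis
  proof (cases "Se = 0")
    case True
    then have S00: "S = 0" using SeS by simp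
    define m where "m = measure M {x \<in> space M. maxfun M D f x > ereal lam}"
    have "m \<le> 0"
    proof (rule ccontr)
      assume "\<not> m \<le> 0"
      then have m0: "m > 0" by simp
      have m1: "m \<le> 1" unfolding m_def by simp
      define t where "t = ln (4/m) / lam"
      have "4/m > 1" using m0 m1 by (simp add: field_simps)
      then have "ln (4/m) > 0" by (rule ln_gt_zero)
      then have t0: "t > 0" unfolding t_def using lam by simp
      have "t * lam = ln (4/m)" unfolding t_def using lam by simp
      then have "exp (-(t*lam)) = m/4" using m0 by (simp add: exp_minus)
      then have "m \<le> 2 * (m/4)" using bound[OF t0] S00 unfolding m_def by simp
      then show False using m0 by simp
    qed
    then show ?thesis using True unfolding m_def Se_def by simp
  next
    case False
    then have S1: "S > 0" using SeS S0 by auto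
    define t where "t = 2*\<alpha>*lam/S^2"
    have t0: "t > 0" unfolding t_def using a0 lam S1 by simp
    have "-(t*lam) + t^2/(4*\<alpha>)*S^2 = - \<alpha> * lam\<^sup>2 / S\<^sup>2"
      unfolding t_def using a0 S1 by (simp add: field_simps power2_eq_square)
    then show ?thesis using bound[OF t0] False unfolding Se_def S_def by simp
  qed
qed

end

theorem theorem2p4:
  fixes M :: "'a measure" and F D :: "nat \<Rightarrow> 'a set set"
    and f :: "'a \<Rightarrow> real" and \<alpha> lam :: real
  assumes "prob_space M"
    and "atomic_filtration M F D"
    and "homogeneous M D \<alpha>"
    and "0 < \<alpha>" and "\<alpha> \<le> 1/2"
    and "integrable M f"
    and "sqfun M D f \<in> borel_measurable M"
    and "esssup M (sqfun M D f) < \<infinity>"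
    and "integral\<^sup>L M f = 0"
    and "lam > 0"
  shows "measure M {x \<in> space M. maxfun M D f x > ereal lam}
           \<le> (if esssup M (sqfun M D f) = 0 then 0
               else 2 * exp (- \<alpha> * lam\<^sup>2 / (real_of_ereal (esssup M (sqfun M D f)))\<^sup>2))"
proof -
  interpret cubes M F D \<alpha> using assms(1-5) by (simp add: cubes_def cubes_axioms_def)
  show ?thesis using final[OF assms(6) assms(9) assms(8) assms(10)] .
qed

end
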